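(* Let $I$ and $J$ be big intervals. The following are equivalent: (1) there is an order-preserving injection $f:I\to J$; (2) there is a (topologically) dense subset $A\subset I$ and an order-preserving injection $h:A\to J$; (3) there is an order-preserving surjection $g:J\to I$.
   Context: A big interval is a totally ordered set, endowed with the order topology, which is compact and connected; equivalently, a totally ordered set which is order complete (every nonempty subset has a supremum), dense (between any two distinct elements there is a third), and has a minimal element $0_I$ and a maximal element $1_I$. A map between totally ordered sets is order-preserving if $s\le t$ implies $f(s)\le f(t)$. *)

theory Defs
  imports "HOL-Analysis.Analysis"
begin

text \<open>A big interval: a totally ordered set, carrying the order topology
  (class linorder_topology), which is compact and connected.  We take the
  whole type as the carrier.\<close>
definition big_interval :: "'a::linorder_topology itself \<Rightarrow> bool" where
  "big_interval _ \<longleftrightarrow> compact (UNIV :: 'a set) \<and> connected (UNIV :: 'a set)"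

end

theory Submission
  imports Defs
begin

lemma lub_exists:
  assumes "compact (UNIV::'a::linorder_topology set)"
  shows "\<exists>m::'a. (\<forall>s\<in>S. s \<le> m) \<and> (\<forall>u. (\<forall>s\<in>S. s \<le> u) \<longrightarrow> m \<le> u)"
proof (cases "S = {}")
  case True
  obtain m :: 'a where "\<forall>t. m \<le> t" using compact_attains_inf[OF assms] by auto
  then show ?thesis using True by auto
next
  case False
  have "compact (closure S)"
    using compact_Int_closed[OF assms, of "closure S"] by simp
  moreover have "closure S \<noteq> {}" using False closure_subset by blast
  ultimately obtain m where m: "m \<in> closure S" "\<forall>t\<in>closure S. t \<le> m"
    using compact_attains_sup by blast
  have "\<forall>s\<in>S. s \<le> m" using m closure_subset by blast
  moreover have "m \<le> u" if "\<forall>s\<in>S. s \<le> u" for u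
  proof -
    have "closure S \<subseteq> {..u}" using that by (intro closure_minimal) auto
    then show ?thesis using m by auto
  qed
  ultimately show ?thesis by blast
qed

lemma dense_order:
  assumes "connected (UNIV::'a::linorder_topology set)" and "(x::'a) < y"
  shows "\<exists>c. x < c \<and> c < y"
proof (rule ccontr)
  assume H: "\<not> (\<exists>c. x < c \<and> c < y)"
  have h1: "{..<y} \<inter> {x<..} \<inter> UNIV = {}"
  proof (rule equals0I)
    fix z assume "z \<in> {..<y} \<inter> {x<..} \<inter> UNIV"
    then have "x < z" "z < y" by simp_all
    then show False using H by blast
  qed
  have h2: "UNIV \<subseteq> {..<y} \<union> {x<..}"
  proof (rule subsetI)
    fix z :: 'a
    show "z \<in> {..<y} \<union> {x<..}"
    proof (cases "z < y")
      case True then show ?thesis by simp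
    next
      case False
      then have "y \<le> z" by (simp only: not_less)
      have "x < z" using assms(2) \<open>y \<le> z\<close> by (rule less_le_trans)
      then show ?thesis by simp
    qed
  qed
  have "{..<y} \<inter> UNIV = {} \<or> {x<..} \<inter> UNIV = {}"
    by (rule connectedD[OF assms(1) open_lessThan open_greaterThan h1 h2])
  moreover have "x \<in> {..<y} \<inter> UNIV" using assms(2) by simp
  moreover have "y \<in> {x<..} \<inter> UNIV" using assms(2) by simp
  ultimately show False by blast
qed

lemma dense_meets:
  assumes "closure A = UNIV" "open T" "T \<noteq> {}"
  shows "\<exists>a\<in>A. a \<in> T"
proof (rule ccontr)
  assume H: "\<not> (\<exists>a\<in>A. a \<in> T)"
  have "A \<subseteq> -T"
  proof
    fix a assume "a \<in> A" then show "a \<in> -T" using H by blast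
  qed
  moreover have "closed (-T)" using assms(2) by (rule closed_Compl)
  ultimately have "closure A \<subseteq> -T" by (rule closure_minimal)
  then have "T = {}" using assms(1) by blast
  then show False using assms(3) by simp
qed

lemma lub_fun: assumes cA: "compact (UNIV::'a::linorder_topology set)"
  shows "\<exists>lA :: 'a set \<Rightarrow> 'a. \<forall>S. (\<forall>s\<in>S. s \<le> lA S) \<and> (\<forall>u. (\<forall>s\<in>S. s \<le> u) \<longrightarrow> lA S \<le> u)"
proof -
  have lubA: "\<forall>S::'a set. \<exists>m. (\<forall>s\<in>S. s \<le> m) \<and> (\<forall>u. (\<forall>s\<in>S. s \<le> u) \<longrightarrow> m \<le> u)"
    using lub_exists[OF cA] by blast
  then show ?thesis by (rule choice)
qed

lemma lub_obtain: assumes cA: "compact (UNIV::'a set)"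
  obtains lA :: "'a::linorder_topology set \<Rightarrow> 'a" where "\<And>S s. s \<in> S \<Longrightarrow> s \<le> lA S"
    "\<And>S u. (\<And>s. s \<in> S \<Longrightarrow> s \<le> u) \<Longrightarrow> lA S \<le> u"
proof -
  from lub_fun[OF cA] obtain lA :: "'a set \<Rightarrow> 'a" where
    lA: "\<forall>S. (\<forall>s\<in>S. s \<le> lA S) \<and> (\<forall>u. (\<forall>s\<in>S. s \<le> u) \<longrightarrow> lA S \<le> u)" by (rule exE)
  show ?thesis
  proof (rule that[of lA])
    fix S :: "'a set" and s :: 'a assume "s \<in> S" then show "s \<le> lA S" using lA by blast
  next
    fix S :: "'a set" and u :: 'a assume "\<And>s. s \<in> S \<Longrightarrow> s \<le> u" then show "lA S \<le> u" using lA by blast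
  qed
qed
lemma i12: fixes f :: "'a::linorder_topology \<Rightarrow> 'b::linorder"
  assumes "mono f" "inj f"
  shows "\<exists>(A :: 'a set) (h :: 'a \<Rightarrow> 'b). closure A = UNIV \<and> mono_on A h \<and> inj_on h A"
proof -
  have "closure (UNIV::'a set) = UNIV" by simp
  moreover have "mono_on UNIV f" using assms(1) by (rule mono_imp_mono_on)
  ultimately show ?thesis using assms(2) by blast
qed

lemma i31: fixes g :: "'b::linorder \<Rightarrow> 'a::linorder"
  assumes "mono g" "surj g"
  shows "\<exists>f :: 'a \<Rightarrow> 'b. mono f \<and> inj f"
proof -
    define f where "f x = (SOME y. g y = x)" for x
    have gf: "g (f x) = x" for x
    proof -
      obtain y where "g y = x" using surjD[OF assms(2), of x] by blast
      then show ?thesis unfolding f_def by (rule someI)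
    qed
    have "inj f" by (rule inj_on_inverseI[of _ g]) (rule gf)
    moreover have "mono f"
    proof (rule monoI)
      fix x y :: 'a assume "x \<le> y"
      show "f x \<le> f y"
      proof (rule ccontr)
        assume "\<not> f x \<le> f y"
        hence "f y \<le> f x" by simp
        hence "g (f y) \<le> g (f x)" by (rule monoD[OF \<open>mono g\<close>])
        hence "y \<le> x" by (simp add: gf)
        hence "x = y" using \<open>x \<le> y\<close> by simp
        thus False using \<open>\<not> f x \<le> f y\<close> by simp
      qed
    qed
    ultimately show ?thesis by blast
qed
lemma strict_of_mono_inj:
  fixes h :: "'a::linorder \<Rightarrow> 'b::linorder"
  assumes "mono_on A h" "inj_on h A" "a \<in> A" "b \<in> A" "a < b"
  shows "h a < h b"
proof -
  have "h a \<le> h b" using mono_onD[OF assms(1,3,4)] assms(5) by simp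
  moreover have "h a \<noteq> h b" using assms inj_onD[OF assms(2)] by fastforce
  ultimately show ?thesis by simp
qed

lemma i13: fixes f :: "'a::linorder \<Rightarrow> 'b::linorder" and lA :: "'a set \<Rightarrow> 'a"
  assumes ub: "\<And>S s. s \<in> S \<Longrightarrow> s \<le> lA S"
    and least: "\<And>S u. (\<And>s. s \<in> S \<Longrightarrow> s \<le> u) \<Longrightarrow> lA S \<le> u"
    and "mono f" "inj f"
  shows "\<exists>g :: 'b \<Rightarrow> 'a. mono g \<and> surj g"
proof -
  have lAmono: "lA S \<le> lA T" if "S \<subseteq> T" for S T
    by (rule least) (use that ub in blast)
  define g where "g y = lA {x. f x \<le> y}" for y
  have "mono g"
  proof (rule monoI)
    fix y y' :: 'b assume "y \<le> y'"
    then have "{x. f x \<le> y} \<subseteq> {x. f x \<le> y'}" by auto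
    then show "g y \<le> g y'" unfolding g_def by (rule lAmono)
  qed
  moreover have "g (f x) = x" for x
  proof -
    have st: "f a < f b" if "a < b" for a b
      by (rule strict_of_mono_inj[OF mono_imp_mono_on[OF \<open>mono f\<close>] \<open>inj f\<close> UNIV_I UNIV_I that])
    have iff: "f x' \<le> f x \<longleftrightarrow> x' \<le> x" for x'
    proof
      assume "x' \<le> x" then show "f x' \<le> f x" by (rule monoD[OF \<open>mono f\<close>])
    next
      assume "f x' \<le> f x"
      show "x' \<le> x"
      proof (rule ccontr)
        assume "\<not> x' \<le> x"
        then have "f x < f x'" using st by simp
        then show False using \<open>f x' \<le> f x\<close> by simp
      qed
    qed
    have "{x'. f x' \<le> f x} = {..x}" using iff by auto
    then have "g (f x) = lA {..x}" by (simp add: g_def)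
    also have "\<dots> = x"
    proof (rule order.antisym)
      show "lA {..x} \<le> x" by (rule least) simp
      show "x \<le> lA {..x}" by (rule ub) simp
    qed
    finally show ?thesis .
  qed
  hence "surj g" by (rule surjI)
  ultimately show ?thesis by blast
qed

lemma i21: fixes h :: "'a::linorder_topology \<Rightarrow> 'b::linorder" and lB :: "'b set \<Rightarrow> 'b"
  assumes ub: "\<And>S s. s \<in> S \<Longrightarrow> s \<le> lB S"
    and least: "\<And>S u. (\<And>s. s \<in> S \<Longrightarrow> s \<le> u) \<Longrightarrow> lB S \<le> u"
    and dense: "\<And>x y::'a. x < y \<Longrightarrow> \<exists>c. x < c \<and> c < y"
    and meets: "\<And>T. open T \<Longrightarrow> T \<noteq> {} \<Longrightarrow> \<exists>a\<in>A. a \<in> T"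
    and hm: "mono_on A h" and hi: "inj_on h A"
  shows "\<exists>f :: 'a \<Rightarrow> 'b. mono f \<and> inj f"
proof -
  have lBmono: "lB S \<le> lB T" if "S \<subseteq> T" for S T
    by (rule least) (use that ub in blast)
  define f where "f x = lB (h ` {a\<in>A. a \<le> x})" for x
  have "mono f"
  proof (rule monoI)
    fix x y :: 'a assume "x \<le> y"
    then have "h ` {a\<in>A. a \<le> x} \<subseteq> h ` {a\<in>A. a \<le> y}" by auto
    then show "f x \<le> f y" unfolding f_def by (rule lBmono)
  qed
  moreover have lt: "f x < f y" if "x < y" for x y
  proof -
    obtain c where c: "x < c" "c < y" using dense[OF \<open>x < y\<close>] by blast
    obtain d1 where d1: "x < d1" "d1 < c" using dense[OF c(1)] by blast
    obtain d2 where d2: "c < d2" "d2 < y" using dense[OF c(2)] by blast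
    have ne1: "{x<..<c} \<noteq> {}" using d1 by auto
    have ne2: "{c<..<y} \<noteq> {}" using d2 by auto
    obtain a where a: "a \<in> A" "x < a" "a < c"
      using meets[OF open_greaterThanLessThan ne1] by auto
    obtain b where b: "b \<in> A" "c < b" "b < y"
      using meets[OF open_greaterThanLessThan ne2] by auto
    have hab: "h a < h b" using strict_of_mono_inj[OF hm hi a(1) b(1)] a b by simp
    have "f x \<le> h a"
      unfolding f_def
    proof (rule least)
      fix s assume "s \<in> h ` {a'\<in>A. a' \<le> x}"
      then obtain a' where a': "a' \<in> A" "a' \<le> x" "s = h a'" by auto
      have "a' \<le> a" using a'(2) a(2) by simp
      then show "s \<le> h a" using mono_onD[OF hm a'(1) a(1)] a'(3) by simp
    qed
    moreover have "h b \<le> f y"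
      unfolding f_def by (rule ub) (use b in auto)
    ultimately show ?thesis using hab by simp
  qed
  moreover have "inj f"
  proof (rule injI)
    fix x y assume "f x = f y"
    show "x = y"
    proof (rule ccontr)
      assume "x \<noteq> y"
      then have "x < y \<or> y < x" by auto
      then show False using lt[of x y] lt[of y x] \<open>f x = f y\<close> by auto
    qed
  qed
  ultimately show ?thesis by blast
qed
theorem mainTheorem1:
  assumes "big_interval TYPE('a::linorder_topology)"
      and "big_interval TYPE('b::linorder_topology)"
  shows "((\<exists>f :: 'a \<Rightarrow> 'b. mono f \<and> inj f)
            \<longleftrightarrow> (\<exists>(A :: 'a set) (h :: 'a \<Rightarrow> 'b). closure A = UNIV \<and> mono_on A h \<and> inj_on h A))
       \<and> ((\<exists>f :: 'a \<Rightarrow> 'b. mono f \<and> inj f)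
            \<longleftrightarrow> (\<exists>g :: 'b \<Rightarrow> 'a. mono g \<and> surj g))"
proof -
  have cA: "compact (UNIV::'a set)" "connected (UNIV::'a set)"
    using assms(1) by (auto simp: big_interval_def)
  have cB: "compact (UNIV::'b set)"
    using assms(2) by (auto simp: big_interval_def)
  obtain lA :: "'a set \<Rightarrow> 'a" where ubA: "\<And>S s. s \<in> S \<Longrightarrow> s \<le> lA S"
    and leA: "\<And>S u. (\<And>s. s \<in> S \<Longrightarrow> s \<le> u) \<Longrightarrow> lA S \<le> u"
    by (rule lub_obtain[OF cA(1)]) iprover
  obtain lB :: "'b set \<Rightarrow> 'b" where ubB: "\<And>S s. s \<in> S \<Longrightarrow> s \<le> lB S"
    and leB: "\<And>S u. (\<And>s. s \<in> S \<Longrightarrow> s \<le> u) \<Longrightarrow> lB S \<le> u"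
    by (rule lub_obtain[OF cB]) iprover
  have dense: "\<And>x y::'a. x < y \<Longrightarrow> \<exists>c. x < c \<and> c < y"
    by (rule dense_order[OF cA(2)])
  show ?thesis
  proof (intro conjI iffI)
    assume "\<exists>f :: 'a \<Rightarrow> 'b. mono f \<and> inj f"
    then obtain f :: "'a \<Rightarrow> 'b" where f: "mono f" "inj f" by iprover
    show "\<exists>(A :: 'a set) (h :: 'a \<Rightarrow> 'b). closure A = UNIV \<and> mono_on A h \<and> inj_on h A"
      by (rule i12[OF f])
  next
    assume "\<exists>(A :: 'a set) (h :: 'a \<Rightarrow> 'b). closure A = UNIV \<and> mono_on A h \<and> inj_on h A"
    then obtain A and h :: "'a \<Rightarrow> 'b" where hA: "closure A = UNIV" "mono_on A h" "inj_on h A" by iprover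
    have meets: "\<And>T. open T \<Longrightarrow> T \<noteq> {} \<Longrightarrow> \<exists>a\<in>A. a \<in> T"
      by (rule dense_meets[OF hA(1)])
    show "\<exists>f :: 'a \<Rightarrow> 'b. mono f \<and> inj f"
      by (rule i21[OF ubB leB dense meets hA(2) hA(3)])
  next
    assume "\<exists>f :: 'a \<Rightarrow> 'b. mono f \<and> inj f"
    then obtain f :: "'a \<Rightarrow> 'b" where f: "mono f" "inj f" by iprover
    show "\<exists>g :: 'b \<Rightarrow> 'a. mono g \<and> surj g" by (rule i13[OF ubA leA f])
  next
    assume "\<exists>g :: 'b \<Rightarrow> 'a. mono g \<and> surj g"
    then obtain g :: "'b \<Rightarrow> 'a" where g: "mono g" "surj g" by iprover
    show "\<exists>f :: 'a \<Rightarrow> 'b. mono f \<and> inj f" by (rule i31[OF g])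
  qed
qed

end
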